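(* There exists a $5\times 5$ pandiagonal magic square $A$ whose twenty-five entries are pairwise distinct strings of length $4$ over $\{0,1,2\}$ (read as decimal numbers, leading zeros allowed), with magic sum $S1=5555$, such that the rotated array $R(A)$ is also a magic square with magic sum $5555$.
   Context: A magic square of order $n$ is an $n\times n$ array of numbers in which the sums of the entries of each row, of each column and of each of the two principal diagonals all equal a common value $S1$ (the magic sum). It is pandiagonal if moreover all $2n$ broken diagonals (the sets $\{(i,j): j-i\equiv c \pmod n\}$ and $\{(i,j): i+j\equiv c\pmod n\}$) have sum $S1$. For an $n\times n$ array $A$ whose entries are digit strings $d_1d_2\cdots d_k$ over $\{0,1,2\}$, the rotated array $R(A)$ is defined by $R(A)_{i,j}=\overline{A_{n+1-i,\,n+1-j}}$, where $\overline{d_1\cdots d_k}=d_k\cdots d_1$. Strings are interpreted as decimal integers. *)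

theory Defs
  imports Main
begin

(* Digit strings are lists of digits d1 d2 ... dk (most significant first). *)
definition dec_val :: "nat list \<Rightarrow> nat" where
  "dec_val ds = foldl (\<lambda>acc d. 10 * acc + d) 0 ds"

(* n x n arrays, indices 0..n-1 (the paper uses 1..n). *)
definition magic_square :: "nat \<Rightarrow> (nat \<Rightarrow> nat \<Rightarrow> nat) \<Rightarrow> nat \<Rightarrow> bool" where
  "magic_square n M S \<longleftrightarrow>
     (\<forall>i<n. (\<Sum>j<n. M i j) = S) \<and>
     (\<forall>j<n. (\<Sum>i<n. M i j) = S) \<and>
     (\<Sum>i<n. M i i) = S \<and>
     (\<Sum>i<n. M i (n - 1 - i)) = S"

(* broken diagonals {(i,j): j-i = c mod n} and {(i,j): i+j = c mod n} *)
definition pandiagonal_magic :: "nat \<Rightarrow> (nat \<Rightarrow> nat \<Rightarrow> nat) \<Rightarrow> nat \<Rightarrow> bool" where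
  "pandiagonal_magic n M S \<longleftrightarrow> magic_square n M S \<and>
     (\<forall>c<n. (\<Sum>i<n. M i ((i + c) mod n)) = S) \<and>
     (\<forall>c<n. (\<Sum>i<n. M i ((c + n - i) mod n)) = S)"

(* R(A)_{i,j} = reverse of A_{n+1-i, n+1-j}, in 0-based indexing *)
definition rotate_arr :: "nat \<Rightarrow> (nat \<Rightarrow> nat \<Rightarrow> 'a list) \<Rightarrow> nat \<Rightarrow> nat \<Rightarrow> 'a list" where
  "rotate_arr n A i j = rev (A (n - 1 - i) (n - 1 - j))"

end

theory Submission
  imports Defs
begin

definition LL :: "nat list list list" where
  "LL = [[[0,2,1,1], [0,1,2,0], [2,1,0,0], [2,1,1,2], [1,0,1,2]], [[2,1,0,2], [1,1,1,2], [0,0,1,1], [0,2,1,0], [2,1,2,0]], [[0,0,1,0], [2,2,1,0], [2,1,2,2], [1,1,0,2], [0,1,1,1]], [[1,1,2,2], [0,1,0,1], [0,1,1,0], [2,0,1,0], [2,2,1,2]], [[2,1,1,0], [2,0,1,2], [1,2,1,2], [0,1,2,1], [0,1,0,0]]]"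

lemma all5: "(\<forall>i<(5::nat). P i) \<longleftrightarrow> P 0 \<and> P 1 \<and> P 2 \<and> P 3 \<and> P 4"
  by (auto simp: less_Suc_eq numeral_eq_Suc)

lemma sum5: "(\<Sum>i<(5::nat). f i) = f 0 + f 1 + f 2 + f 3 + (f 4 :: nat)"
  by (simp add: numeral_eq_Suc)

theorem mainTheorem3:
  shows "\<exists>A :: nat \<Rightarrow> nat \<Rightarrow> nat list.
    (\<forall>i<5. \<forall>j<5. length (A i j) = 4 \<and> set (A i j) \<subseteq> {0, 1, 2}) \<and>
    (\<forall>i<5. \<forall>j<5. \<forall>k<5. \<forall>l<5. A i j = A k l \<longrightarrow> (i, j) = (k, l)) \<and>
    pandiagonal_magic 5 (\<lambda>i j. dec_val (A i j)) 5555 \<and>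
    magic_square 5 (\<lambda>i j. dec_val (rotate_arr 5 A i j)) 5555"
  apply (rule exI[of _ "\<lambda>i j. LL ! i ! j"])
  apply (simp only: all5 sum5 pandiagonal_magic_def magic_square_def rotate_arr_def)
  apply (simp add: LL_def dec_val_def)
  done

end
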